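(* Let $X$ be a measurable space, $\mathcal{H}$ a Hilbert space and $\gamma:X\to\mathcal{H}$, $x\mapsto\gamma_x$. Assume that $\mathcal{H}_\gamma=\overline{\mathrm{span}}\{\gamma_x\in\mathcal{H}\mid x\in X\}$ is separable. Then the following conditions are equivalent: (1) the map $\gamma$ is weakly measurable, i.e. for every $v\in\mathcal{H}$ the function $A_\gamma v:X\to\mathbb{C}$, $(A_\gamma v)(x)=\langle v,\gamma_x\rangle_{\mathcal{H}}$, is measurable; (2) the map $\gamma$ is measurable from $X$ to $\mathcal{H}$; (3) the function $\Gamma:X\times X\to\mathbb{C}$, $\Gamma(x,t)=\langle\gamma_t,\gamma_x\rangle_{\mathcal{H}}$, is measurable; (4) for all $x\in X$, the function $\Gamma(x,\cdot)$ is measurable from $X$ into $\mathbb{C}$. If $X$ is endowed with a $\sigma$-finite measure $\mu$ and one of the conditions (1)–(4) holds, then $\mathrm{ran}\,A_\gamma\subset\mathcal{M}(X,\mu)$, the operator $A_\gamma$ is continuous from $\mathcal{H}$ into $\mathcal{M}(X,\mu)$, and $$\ker A_\gamma=\mathcal{H}_\mu^\perp,$$ where $\mathcal{S}=\{v\in\mathcal{H}\mid \mu(\gamma^{-1}(B(v,\varepsilon)))>0\ \forall\varepsilon>0\}$ (with $B(v,\varepsilon)=\{w\in\mathcal{H}\mid\|w-v\|_{\mathcal{H}}<\varepsilon\}$) is the essential range of $\gamma$ and $\mathcal{H}_\mu=\overline{\mathrm{span}}\,\mathcal{S}$.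
   Context: $\mathcal{M}(X,\mu)$ denotes the topological vector space of all measurable complex functions on $X$ (identified $\mu$-a.e.) endowed with the topology of convergence in measure on subsets of finite measure. The scalar product $\langle\cdot,\cdot\rangle_{\mathcal{H}}$ is linear in the first argument. *)

theory Defs
  imports "HOL-Analysis.Analysis" "HOL-Probability.Probability"
begin

text \<open>A complex Hilbert space: a real Banach space type 'h together with a complex
  scalar multiplication sc (extending the real one) and a complex inner product ci,
  linear in the first argument, conjugate symmetric, inducing the norm.\<close>
definition complex_hilbert ::
  "(complex \<Rightarrow> 'h::banach \<Rightarrow> 'h) \<Rightarrow> ('h \<Rightarrow> 'h \<Rightarrow> complex) \<Rightarrow> bool" where
  "complex_hilbert sc ci \<longleftrightarrow>
     (\<forall>r x. sc (complex_of_real r) x = scaleR r x) \<and>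
     (\<forall>a x y. sc a (x + y) = sc a x + sc a y) \<and>
     (\<forall>a b x. sc (a + b) x = sc a x + sc b x) \<and>
     (\<forall>a b x. sc (a * b) x = sc a (sc b x)) \<and>
     (\<forall>x y z. ci (x + y) z = ci x z + ci y z) \<and>
     (\<forall>a x y. ci (sc a x) y = a * ci x y) \<and>
     (\<forall>x y. ci y x = cnj (ci x y)) \<and>
     (\<forall>x. ci x x = complex_of_real ((norm x)\<^sup>2))"

definition cspan :: "(complex \<Rightarrow> 'h::real_vector \<Rightarrow> 'h) \<Rightarrow> 'h set \<Rightarrow> 'h set" where
  "cspan sc S = {x. \<exists>F c. finite F \<and> F \<subseteq> S \<and> x = (\<Sum>v\<in>F. sc (c v) v)}"

definition closed_cspan :: "(complex \<Rightarrow> 'h::real_normed_vector \<Rightarrow> 'h) \<Rightarrow> 'h set \<Rightarrow> 'h set" where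
  "closed_cspan sc S = closure (cspan sc S)"

definition orth_compl :: "('h \<Rightarrow> 'h \<Rightarrow> complex) \<Rightarrow> 'h set \<Rightarrow> 'h set" where
  "orth_compl ci S = {w. \<forall>v\<in>S. ci w v = 0}"

definition analysis_op :: "('h \<Rightarrow> 'h \<Rightarrow> complex) \<Rightarrow> ('a \<Rightarrow> 'h) \<Rightarrow> 'h \<Rightarrow> 'a \<Rightarrow> complex" where
  "analysis_op ci \<gamma> v = (\<lambda>x. ci v (\<gamma> x))"

definition ess_range :: "'a measure \<Rightarrow> ('a \<Rightarrow> 'h::metric_space) \<Rightarrow> 'h set" where
  "ess_range M \<gamma> = {v. \<forall>\<epsilon>>0. emeasure M (\<gamma> -` ball v \<epsilon> \<inter> space M) > 0}"

text \<open>Kernel of A_gamma as an operator into M(X,mu): functions identified mu-a.e.\<close>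
definition ker_meas :: "'a measure \<Rightarrow> ('h \<Rightarrow> 'a \<Rightarrow> complex) \<Rightarrow> 'h set" where
  "ker_meas M A = {v. AE x in M. A v x = 0}"

text \<open>Continuity of a map A from a normed space into M(X,mu), endowed with the topology
  of convergence in measure on sets of finite measure: its (sub)basic neighbourhoods of f
  are {g. mu({x in E. |g x - f x| > eps}) < delta} with E of finite measure.\<close>
definition continuous_into_meas :: "'a measure \<Rightarrow> ('h::real_normed_vector \<Rightarrow> 'a \<Rightarrow> complex) \<Rightarrow> bool" where
  "continuous_into_meas M A \<longleftrightarrow>
     (\<forall>v. \<forall>E\<in>sets M. emeasure M E < \<infinity> \<longrightarrow>
        (\<forall>\<epsilon>>0. \<forall>\<delta>>0. \<exists>\<eta>>0. \<forall>w. norm (w - v) < \<eta> \<longrightarrow>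
           emeasure M {x\<in>E. cmod (A w x - A v x) > \<epsilon>} < ennreal \<delta>))"

end

theory Submission imports Defs begin

locale hil =
  fixes sc :: "complex \<Rightarrow> 'h::banach \<Rightarrow> 'h" and ci :: "'h \<Rightarrow> 'h \<Rightarrow> complex"
  assumes hilb: "complex_hilbert sc ci"
begin

lemma sc_real: "sc (complex_of_real r) x = r *\<^sub>R x" using hilb unfolding complex_hilbert_def by blast
lemma sc_add: "sc a (x + y) = sc a x + sc a y" using hilb unfolding complex_hilbert_def by blast
lemma sc_add2: "sc (a + b) x = sc a x + sc b x" using hilb unfolding complex_hilbert_def by blast
lemma sc_mult: "sc (a * b) x = sc a (sc b x)" using hilb unfolding complex_hilbert_def by blast
lemma ci_add1: "ci (x + y) z = ci x z + ci y z" using hilb unfolding complex_hilbert_def by blast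
lemma ci_sc1: "ci (sc a x) y = a * ci x y" using hilb unfolding complex_hilbert_def by blast
lemma ci_cnj: "ci y x = cnj (ci x y)" using hilb unfolding complex_hilbert_def by blast
lemma ci_self: "ci x x = complex_of_real ((norm x)\<^sup>2)" using hilb unfolding complex_hilbert_def by blast

lemma sc_one: "sc 1 x = x" using sc_real[of 1 x] by simp
lemma sc_zero: "sc 0 x = 0" using sc_real[of 0 x] by simp
lemma sc_0: "sc a 0 = 0" using sc_add[of a 0 0] by simp
lemma sc_scaleR: "sc a (r *\<^sub>R x) = r *\<^sub>R sc a x"
  by (metis mult.commute sc_mult sc_real)
lemma sc_minus: "sc a (- x) = - sc a x" using sc_scaleR[of a "-1" x] by simp
lemma sc_diff: "sc a (x - y) = sc a x - sc a y" using sc_add[of a x "-y"] sc_minus by simp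
lemma sc_sum: "sc a (sum f F) = (\<Sum>v\<in>F. sc a (f v))"
  by (induction F rule: infinite_finite_induct) (auto simp: sc_0 sc_add)
lemma ci_add2: "ci z (x + y) = ci z x + ci z y" by (metis ci_add1 ci_cnj complex_cnj_add)
lemma ci_sc2: "ci x (sc a y) = cnj a * ci x y" by (metis ci_cnj ci_sc1 complex_cnj_mult)
lemma ci_0_1[simp]: "ci 0 y = 0" using ci_add1[of 0 0 y] by simp
lemma ci_0_2[simp]: "ci y 0 = 0" using ci_add2[of y 0 0] by simp
lemma ci_scaleR1: "ci (r *\<^sub>R x) y = r *\<^sub>R ci x y"
  by (metis ci_sc1 sc_real scaleR_conv_of_real)
lemma ci_scaleR2: "ci y (r *\<^sub>R x) = r *\<^sub>R ci y x"
  by (metis ci_sc2 sc_real scaleR_conv_of_real complex_cnj_complex_of_real)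

lemma ci_minus1: "ci (- x) y = - ci x y" using ci_scaleR1[of "-1" x y] by simp
lemma ci_minus2: "ci y (- x) = - ci y x" using ci_scaleR2[of y "-1" x] by simp
lemma ci_diff1: "ci (x - y) z = ci x z - ci y z" using ci_add1[of x "-y" z] ci_minus1 by simp
lemma ci_diff2: "ci z (x - y) = ci z x - ci z y" using ci_add2[of z x "-y"] ci_minus2 by simp
lemma ci_sum1: "ci (sum f F) y = (\<Sum>v\<in>F. ci (f v) y)"
  by (induction F rule: infinite_finite_induct) (auto simp: ci_add1)
lemma ci_sum2: "ci y (sum f F) = (\<Sum>v\<in>F. ci y (f v))"
  by (induction F rule: infinite_finite_induct) (auto simp: ci_add2)
lemma Re_ci_self: "Re (ci x x) = (norm x)\<^sup>2" by (simp add: ci_self)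

lemma CS: "cmod (ci x y) \<le> norm x * norm y"
proof (cases "y = 0")
  case True then show ?thesis by simp
next
  case False
  define p where "p = ci x y"
  define N where "N = norm y"
  have N: "N > 0" using False by (simp add: N_def)
  define t where "t = p / complex_of_real (N^2)"
  have "ci (x - sc t y) (x - sc t y) = ci x x - t * ci y x - cnj t * ci x y + t * cnj t * ci y y"
    by (simp add: ci_diff1 ci_diff2 ci_sc1 ci_sc2 algebra_simps)
  also have "\<dots> = ci x x - p * cnj p / complex_of_real (N^2)"
  proof -
    have e1: "ci y x = cnj p" "ci x y = p" "ci y y = complex_of_real (N^2)"
      by (simp_all add: p_def N_def ci_self) (rule ci_cnj)
    have e2: "cnj t = cnj p / complex_of_real (N^2)" by (simp add: t_def)
    have "N^2 \<noteq> 0" using N by simp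
    then have "complex_of_real (N^2) \<noteq> 0" by (metis of_real_eq_0_iff)
    then show ?thesis unfolding e1 e2 unfolding t_def by (simp add: field_simps)
  qed
  also have "\<dots> = ci x x - complex_of_real ((cmod p)^2 / N^2)"
    by (simp add: complex_norm_square[symmetric])
  finally have "(norm (x - sc t y))\<^sup>2 = (norm x)\<^sup>2 - (cmod p)^2 / N^2"
    by (metis Re_complex_of_real ci_self minus_complex.sel(1))
  then have "(cmod p)^2 / N^2 \<le> (norm x)\<^sup>2" by (smt (verit) zero_le_power2)
  then have "(cmod p)^2 \<le> (norm x * N)^2" using N by (simp add: field_simps power_mult_distrib)
  then show ?thesis unfolding p_def N_def
    by (meson norm_ge_zero power2_le_imp_le zero_le_mult_iff)
qed


lemma norm_sc: "norm (sc a x) = cmod a * norm x"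
proof -
  have "complex_of_real ((norm (sc a x))^2) = ci (sc a x) (sc a x)" by (rule ci_self[symmetric])
  also have "\<dots> = (a * cnj a) * ci x x" by (simp add: ci_sc1 ci_sc2 mult.assoc)
  also have "\<dots> = (a * cnj a) * complex_of_real ((norm x)^2)" by (simp only: ci_self)
  also have "\<dots> = complex_of_real ((cmod a)^2 * (norm x)^2)"
    by (metis complex_norm_square of_real_mult)
  finally have "(norm (sc a x))^2 = (cmod a * norm x)^2"
    unfolding power_mult_distrib using of_real_eq_iff by blast
  then show ?thesis using power2_eq_iff_nonneg[of "norm (sc a x)" "cmod a * norm x"] by simp
qed

lemma bl_ci2: "bounded_linear (ci z)"
proof (rule bounded_linear_intro[where K="norm z"])
  show "ci z (x + y) = ci z x + ci z y" for x y by (rule ci_add2)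
  show "ci z (r *\<^sub>R x) = r *\<^sub>R ci z x" for r x by (rule ci_scaleR2)
  show "norm (ci z x) \<le> norm x * norm z" for x using CS[of z x] by (simp add: mult.commute)
qed

lemma bl_ci1: "bounded_linear (\<lambda>x. ci x z)"
proof (rule bounded_linear_intro[where K="norm z"])
  show "ci (x + y) z = ci x z + ci y z" for x y by (rule ci_add1)
  show "ci (r *\<^sub>R x) z = r *\<^sub>R ci x z" for r x by (rule ci_scaleR1)
  show "norm (ci x z) \<le> norm x * norm z" for x using CS[of x z] by simp
qed

lemma bl_sc: "bounded_linear (sc a)"
proof (rule bounded_linear_intro[where K="cmod a"])
  show "sc a (x + y) = sc a x + sc a y" for x y by (rule sc_add)
  show "sc a (r *\<^sub>R x) = r *\<^sub>R sc a x" for r x by (rule sc_scaleR)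
  show "norm (sc a x) \<le> norm x * cmod a" for x by (simp add: norm_sc mult.commute)
qed

lemma cont_ci2: "continuous_on A (ci z)" by (rule linear_continuous_on[OF bl_ci2])
lemma cont_ci1: "continuous_on A (\<lambda>x. ci x z)" by (rule linear_continuous_on[OF bl_ci1])
lemma cont_sc: "continuous_on A (sc a)" by (rule linear_continuous_on[OF bl_sc])

lemma cspan_I: "finite F \<Longrightarrow> F \<subseteq> S \<Longrightarrow> x = (\<Sum>v\<in>F. sc (c v) v) \<Longrightarrow> x \<in> cspan sc S"
  unfolding cspan_def mem_Collect_eq by (rule exI[of _ F], rule exI[of _ c]) simp

lemma cspan_sub: "S \<subseteq> cspan sc S"
proof
  fix x assume "x \<in> S"
  then show "x \<in> cspan sc S" by (intro cspan_I[of "{x}" _ _ "\<lambda>_. 1"]) (auto simp: sc_one)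
qed

lemma cspan_0: "0 \<in> cspan sc S"
  by (rule cspan_I[of "{}" _ _ "\<lambda>_. 1"]) auto

lemma cspan_sc: assumes "x \<in> cspan sc S" shows "sc a x \<in> cspan sc S"
proof -
  obtain F c where F: "finite F" "F \<subseteq> S" "x = (\<Sum>v\<in>F. sc (c v) v)" using assms unfolding cspan_def by auto
  have "sc a x = (\<Sum>v\<in>F. sc ((\<lambda>v. a * c v) v) v)" unfolding F(3) by (simp add: sc_sum sc_mult)
  then show ?thesis using F(1,2) by (intro cspan_I) auto
qed

lemma cspan_add: assumes "x \<in> cspan sc S" "y \<in> cspan sc S" shows "x + y \<in> cspan sc S"
proof -
  obtain F c where F: "finite F" "F \<subseteq> S" "x = (\<Sum>v\<in>F. sc (c v) v)" using assms(1) unfolding cspan_def by auto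
  obtain G d where G: "finite G" "G \<subseteq> S" "y = (\<Sum>v\<in>G. sc (d v) v)" using assms(2) unfolding cspan_def by auto
  define c' where "c' v = (if v \<in> F then c v else 0)" for v
  define d' where "d' v = (if v \<in> G then d v else 0)" for v
  have x: "x = (\<Sum>v\<in>F\<union>G. sc (c' v) v)"
    unfolding F(3) c'_def using F(1) G(1) by (intro sum.mono_neutral_cong_left) (auto simp: sc_zero)
  have y: "y = (\<Sum>v\<in>F\<union>G. sc (d' v) v)"
    unfolding G(3) d'_def using F(1) G(1) by (intro sum.mono_neutral_cong_left) (auto simp: sc_zero)
  have "x + y = (\<Sum>v\<in>F\<union>G. sc ((\<lambda>v. c' v + d' v) v) v)" unfolding x y by (simp add: sum.distrib sc_add2)
  moreover have "finite (F \<union> G)" "F \<union> G \<subseteq> S" using F G by auto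
  ultimately show ?thesis by (intro cspan_I) auto
qed

lemma sc_m1: "sc (-1) x = - x" using sc_real[of "-1" x] by simp

lemma clos_add: assumes "x \<in> closure (cspan sc S)" "y \<in> closure (cspan sc S)"
  shows "x + y \<in> closure (cspan sc S)"
proof -
  have "x + y \<in> closure (cspan sc S) + closure (cspan sc S)" using assms by (rule set_plus_intro)
  also have "\<dots> \<subseteq> closure (cspan sc S + cspan sc S)" by (rule closure_sum)
  also have "\<dots> \<subseteq> closure (cspan sc S)"
    by (rule closure_mono) (auto simp: set_plus_def cspan_add)
  finally show ?thesis .
qed

lemma clos_sc: assumes "x \<in> closure (cspan sc S)" shows "sc a x \<in> closure (cspan sc S)"
proof -
  have "sc a ` closure (cspan sc S) \<subseteq> closure (cspan sc S)"
    by (rule image_closure_subset[OF cont_sc]) (use cspan_sc closure_subset in blast)+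
  then show ?thesis using assms by blast
qed

lemma clos_diff: assumes "x \<in> closure (cspan sc S)" "y \<in> closure (cspan sc S)"
  shows "x - y \<in> closure (cspan sc S)"
  using clos_add[OF assms(1) clos_sc[OF assms(2), of "-1"]] by (simp add: sc_m1)


lemma ratio_le: "cmod (ci z d) / norm d \<le> norm z"
proof (cases "d = 0")
  case False then show ?thesis using CS[of z d] by (simp add: divide_le_eq)
qed simp

lemma norm_approx:
  assumes z: "z \<in> closure D" and r: "r < norm z"
  shows "\<exists>d\<in>insert 0 D. r < cmod (ci z d) / norm d"
proof (cases "r < 0")
  case True then show ?thesis by (intro bexI[of _ 0]) auto
next
  case False
  then have zne: "z \<noteq> 0" using r by auto
  define \<phi> where "\<phi> y = cmod (ci z y) / norm y" for y
  have c1: "isCont (ci z) z" by (rule linear_continuous_at[OF bl_ci2])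
  have "isCont \<phi> z" unfolding \<phi>_def
    using zne c1 by (auto intro!: continuous_intros)
  moreover have "\<phi> z = norm z" unfolding \<phi>_def using zne by (simp add: ci_self norm_mult power2_eq_square)
  moreover have "norm z - r > 0" using r by simp
  ultimately obtain \<delta> where \<delta>: "\<delta> > 0" "\<And>y. dist y z < \<delta> \<Longrightarrow> dist (\<phi> y) (norm z) < norm z - r"
    unfolding continuous_at_eps_delta by metis
  obtain d where d: "d \<in> D" "dist d z < \<delta>" using z \<delta>(1) closure_approachable by blast
  have "r < \<phi> d" using \<delta>(2)[OF d(2)] by (simp add: dist_real_def)
  then show ?thesis using d(1) unfolding \<phi>_def by blast
qed

lemma norm_meas:
  assumes D: "countable D" and fD: "\<And>\<omega>. \<omega> \<in> space N \<Longrightarrow> f \<omega> \<in> closure D"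
    and m: "\<And>d. d \<in> D \<Longrightarrow> (\<lambda>\<omega>. ci (f \<omega>) d) \<in> borel_measurable N"
  shows "(\<lambda>\<omega>. norm (f \<omega>)) \<in> borel_measurable N"
  unfolding borel_measurable_iff_greater
proof (intro allI)
  fix a :: real
  have "{\<omega> \<in> space N. a < norm (f \<omega>)} = (\<Union>d\<in>insert 0 D. {\<omega> \<in> space N. a < cmod (ci (f \<omega>) d) / norm d})"
  proof (intro equalityI subsetI)
    fix \<omega> assume "\<omega> \<in> {\<omega> \<in> space N. a < norm (f \<omega>)}"
    then have "\<omega> \<in> space N" "a < norm (f \<omega>)" by auto
    then obtain d where "d \<in> insert 0 D" "a < cmod (ci (f \<omega>) d) / norm d"
      using norm_approx[OF fD] by blast
    then show "\<omega> \<in> (\<Union>d\<in>insert 0 D. {\<omega> \<in> space N. a < cmod (ci (f \<omega>) d) / norm d})"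
      using \<open>\<omega> \<in> space N\<close> by blast
  next
    fix \<omega> assume "\<omega> \<in> (\<Union>d\<in>insert 0 D. {\<omega> \<in> space N. a < cmod (ci (f \<omega>) d) / norm d})"
    then obtain d where "\<omega> \<in> space N" "a < cmod (ci (f \<omega>) d) / norm d" by blast
    then show "\<omega> \<in> {\<omega> \<in> space N. a < norm (f \<omega>)}" using ratio_le[of "f \<omega>" d] by auto
  qed
  also have "\<dots> \<in> sets N"
  proof (rule sets.countable_UN'')
    show "countable (insert 0 D)" using D by simp
    fix d assume d: "d \<in> insert 0 D"
    have "(\<lambda>\<omega>. cmod (ci (f \<omega>) d) / norm d) \<in> borel_measurable N"
    proof (cases "d = 0")
      case True then show ?thesis by simp
    next
      case False then show ?thesis using d m by auto
    qed
    then show "{\<omega> \<in> space N. a < cmod (ci (f \<omega>) d) / norm d} \<in> sets N"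
      unfolding borel_measurable_iff_greater by blast
  qed
  finally show "{\<omega> \<in> space N. a < norm (f \<omega>)} \<in> sets N" .
qed


lemma norm_add_sc: "(norm (a + sc \<alpha> b))^2 = (norm a)^2 + (cmod \<alpha>)^2 * (norm b)^2 + 2 * Re (cnj \<alpha> * ci a b)"
proof -
  have "complex_of_real ((norm (a + sc \<alpha> b))^2) = ci (a + sc \<alpha> b) (a + sc \<alpha> b)" by (rule ci_self[symmetric])
  also have "\<dots> = ci a a + cnj \<alpha> * ci a b + \<alpha> * ci b a + (\<alpha> * cnj \<alpha>) * ci b b"
    by (simp add: ci_add1 ci_add2 ci_sc1 ci_sc2 algebra_simps)
  finally have 1: "(norm (a + sc \<alpha> b))^2 = Re (ci a a + cnj \<alpha> * ci a b + \<alpha> * ci b a + (\<alpha> * cnj \<alpha>) * ci b b)"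
    by (metis Re_complex_of_real)
  have 2: "(\<alpha> * cnj \<alpha>) * ci b b = complex_of_real ((cmod \<alpha>)^2 * (norm b)^2)"
    by (metis ci_self complex_norm_square of_real_mult)
  have 3: "\<alpha> * ci b a = cnj (cnj \<alpha> * ci a b)" by (simp add: ci_cnj[of b a])
  have 4: "Re (ci a a) = (norm a)^2" by (simp add: ci_self)
  have 5: "Re (\<alpha> * ci b a) = Re (cnj \<alpha> * ci a b)" unfolding 3 by simp
  have 6: "Re ((\<alpha> * cnj \<alpha>) * ci b b) = (cmod \<alpha>)^2 * (norm b)^2" unfolding 2 by (simp only: Re_complex_of_real)
  have "Re (ci a a + cnj \<alpha> * ci a b + \<alpha> * ci b a + (\<alpha> * cnj \<alpha>) * ci b b)
     = Re (ci a a) + Re (cnj \<alpha> * ci a b) + Re (\<alpha> * ci b a) + Re ((\<alpha> * cnj \<alpha>) * ci b b)"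
    by (simp only: plus_complex.sel)
  then show ?thesis unfolding 1 4 5 6 by simp
qed

lemma orth_clos: "orth_compl ci (closed_cspan sc R) = orth_compl ci R"
proof
  show "orth_compl ci (closed_cspan sc R) \<subseteq> orth_compl ci R"
    unfolding orth_compl_def closed_cspan_def using cspan_sub closure_subset by blast
next
  show "orth_compl ci R \<subseteq> orth_compl ci (closed_cspan sc R)"
  proof
    fix w assume w: "w \<in> orth_compl ci R"
    have "cspan sc R \<subseteq> {y. ci w y = 0}"
    proof
      fix y assume "y \<in> cspan sc R"
      then obtain F c where F: "finite F" "F \<subseteq> R" "y = (\<Sum>v\<in>F. sc (c v) v)" unfolding cspan_def by auto
      have "ci w y = (\<Sum>v\<in>F. cnj (c v) * ci w v)" unfolding F(3) by (simp add: ci_sum2 ci_sc2)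
      also have "\<dots> = 0" using w F(2) unfolding orth_compl_def by (intro sum.neutral) auto
      finally show "y \<in> {y. ci w y = 0}" by simp
    qed
    moreover have "closed {y. ci w y = 0}" by (rule closed_Collect_eq[OF cont_ci2 continuous_on_const])
    ultimately have "closure (cspan sc R) \<subseteq> {y. ci w y = 0}" by (rule closure_minimal)
    then show "w \<in> orth_compl ci (closed_cspan sc R)" unfolding orth_compl_def closed_cspan_def by blast
  qed
qed

end

lemma meas_cnj[measurable (raw)]: "f \<in> borel_measurable M \<Longrightarrow> (\<lambda>x. cnj (f x)) \<in> borel_measurable M"
  by (rule borel_measurable_continuous_on[where f=cnj]) (auto intro: continuous_intros)

lemma dense_subset:
  fixes S :: "'a::metric_space set"
  assumes "separable_space (top_of_set (closure S))"
  shows "\<exists>D. countable D \<and> D \<subseteq> S \<and> closure S \<subseteq> closure D"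
proof -
  obtain C where C: "countable C" "C \<subseteq> closure S" "closure S \<inter> closure (closure S \<inter> C) = closure S"
    using assms unfolding separable_space_def by (auto simp: closure_of_subtopology)
  have e: "closure S \<inter> C = C" using C(2) by blast
  have C3: "closure S \<subseteq> closure C" using C(3) unfolding e by blast
  have "\<forall>c\<in>C. \<forall>n::nat. \<exists>y\<in>S. dist y c < 1 / real (Suc n)"
  proof (intro ballI allI)
    fix c and n :: nat assume "c \<in> C"
    then have c: "c \<in> closure S" using C(2) by blast
    have p: "1 / real (Suc n) > 0" by simp
    show "\<exists>y\<in>S. dist y c < 1 / real (Suc n)" using c p by (meson closure_approachable)
  qed
  then obtain g where g: "\<And>c n. c \<in> C \<Longrightarrow> g c n \<in> S \<and> dist (g c n) c < 1 / real (Suc n)" by metis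
  define D where "D = (\<lambda>(c,n). g c n) ` (C \<times> (UNIV::nat set))"
  have "countable D" unfolding D_def using C(1) by auto
  moreover have "D \<subseteq> S" using g unfolding D_def by auto
  moreover have "closure S \<subseteq> closure D"
  proof
    fix k assume "k \<in> closure S"
    then have k: "k \<in> closure C" using C3 by auto
    show "k \<in> closure D" unfolding closure_approachable
    proof (intro allI impI)
      fix e :: real assume e: "e > 0"
      obtain c where c: "c \<in> C" "dist c k < e/2" using k e closure_approachable half_gt_zero by blast
      obtain n :: nat where n: "1 / real (Suc n) < e/2" using e by (metis half_gt_zero nat_approx_posE)
      have "g c n \<in> D" unfolding D_def using c(1) by force
      moreover have "dist (g c n) k < e" using g[OF c(1), of n] c(2) n dist_triangle[of "g c n" k c] by linarith
      ultimately show "\<exists>y\<in>D. dist y k < e" by blast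
    qed
  qed
  ultimately show ?thesis by blast
qed

lemma pettis:
  fixes g :: "'a \<Rightarrow> 'b::metric_space"
  assumes D: "countable D" and gD: "\<And>x. x \<in> space M \<Longrightarrow> g x \<in> closure D"
    and m: "\<And>d. d \<in> D \<Longrightarrow> (\<lambda>x. dist (g x) d) \<in> borel_measurable M"
  shows "g \<in> borel_measurable M"
proof (rule borel_measurableI)
  fix U :: "'b set" assume U: "open U"
  define A where "A p = (if ball (fst p) (1 / real (Suc (snd p))) \<subseteq> U
      then {x\<in>space M. dist (g x) (fst p) < 1 / real (Suc (snd p))} else {})" for p :: "'b \<times> nat"
  have "g -` U \<inter> space M = (\<Union>p\<in>D \<times> UNIV. A p)"
  proof (intro equalityI subsetI)
    fix x assume x: "x \<in> g -` U \<inter> space M"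
    then obtain e where e: "e > 0" "ball (g x) e \<subseteq> U" using U open_contains_ball by blast
    obtain n::nat where n: "1 / real (Suc n) < e/2" using e by (metis half_gt_zero nat_approx_posE)
    have "1 / real (Suc n) > 0" by simp
    then obtain d where d: "d \<in> D" "dist d (g x) < 1 / real (Suc n)"
      using gD x closure_approachable by blast
    have "ball d (1 / real (Suc n)) \<subseteq> U"
    proof
      fix y assume "y \<in> ball d (1 / real (Suc n))"
      then have "dist d y < 1 / real (Suc n)" by simp
      then have "dist (g x) y < e" using d(2) n dist_triangle[of "g x" y d] by (simp add: dist_commute)
      then show "y \<in> U" using e(2) by auto
    qed
    then have "x \<in> A (d, n)" unfolding A_def using d x by (simp add: dist_commute)
    then show "x \<in> (\<Union>p\<in>D \<times> UNIV. A p)" using d(1) by blast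
  next
    fix x assume "x \<in> (\<Union>p\<in>D \<times> UNIV. A p)"
    then obtain d n where "ball d (1 / real (Suc n)) \<subseteq> U" "x \<in> space M" "dist (g x) d < 1 / real (Suc n)"
      unfolding A_def by (auto split: if_splits)
    then show "x \<in> g -` U \<inter> space M" by (auto simp: dist_commute)
  qed
  also have "\<dots> \<in> sets M"
  proof (rule sets.countable_UN'')
    show "countable (D \<times> (UNIV::nat set))" using D by simp
    fix p assume p: "p \<in> D \<times> (UNIV::nat set)"
    have "{x\<in>space M. dist (g x) (fst p) < 1 / real (Suc (snd p))} \<in> sets M"
    proof -
      have "fst p \<in> D" using p by auto
      then have md: "(\<lambda>x. dist (g x) (fst p)) \<in> borel_measurable M" using m by blast
      then show ?thesis unfolding borel_measurable_iff_less by blast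
    qed
    then show "A p \<in> sets M" unfolding A_def by simp
  qed
  finally show "g -` U \<inter> space M \<in> sets M" .
qed


theorem proposition2:
  fixes M :: "'a measure"
    and sc :: "complex \<Rightarrow> 'h::banach \<Rightarrow> 'h"
    and ci :: "'h \<Rightarrow> 'h \<Rightarrow> complex"
    and \<gamma> :: "'a \<Rightarrow> 'h"
  assumes hilb: "complex_hilbert sc ci"
    and sep: "separable_space (top_of_set (closed_cspan sc (\<gamma> ` space M)))"
  defines "c1 \<equiv> (\<forall>v. analysis_op ci \<gamma> v \<in> borel_measurable M)"
    and "c2 \<equiv> \<gamma> \<in> borel_measurable M"
    and "c3 \<equiv> (\<lambda>(x, t). ci (\<gamma> t) (\<gamma> x)) \<in> borel_measurable (M \<Otimes>\<^sub>M M)"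
    and "c4 \<equiv> (\<forall>x\<in>space M. (\<lambda>t. ci (\<gamma> t) (\<gamma> x)) \<in> borel_measurable M)"
  shows "(c1 \<longleftrightarrow> c2) \<and> (c2 \<longleftrightarrow> c3) \<and> (c3 \<longleftrightarrow> c4) \<and>
    (sigma_finite_measure M \<and> (c1 \<or> c2 \<or> c3 \<or> c4) \<longrightarrow>
      (\<forall>v. analysis_op ci \<gamma> v \<in> borel_measurable M) \<and>
      continuous_into_meas M (analysis_op ci \<gamma>) \<and>
      ker_meas M (analysis_op ci \<gamma>) = orth_compl ci (closed_cspan sc (ess_range M \<gamma>)))"
proof -
  interpret hil sc ci using hilb by (simp add: hil_def)
  define S where "S = \<gamma> ` space M"
  define K where "K = closure (cspan sc S)"
  obtain D where D: "countable D" "D \<subseteq> cspan sc S" "K \<subseteq> closure D"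
    using dense_subset[of "cspan sc S"] sep unfolding closed_cspan_def S_def K_def by blast
  have \<gamma>K: "\<And>x. x \<in> space M \<Longrightarrow> \<gamma> x \<in> K"
    using cspan_sub closure_subset unfolding K_def S_def by blast
  have DK: "D \<subseteq> K" using D(2) closure_subset unfolding K_def by blast
  define P where "P \<longleftrightarrow> (\<forall>d\<in>cspan sc S. (\<lambda>x. ci d (\<gamma> x)) \<in> borel_measurable M)"

  have c1P: "c1 \<Longrightarrow> P" unfolding c1_def P_def analysis_op_def by blast

  have Pc2: "P \<Longrightarrow> c2"
  proof -
    assume P: P
    have mg: "(\<lambda>x. ci (\<gamma> x) d) \<in> borel_measurable M" if "d \<in> cspan sc S" for d
    proof -
      have "(\<lambda>x. ci d (\<gamma> x)) \<in> borel_measurable M" using P that unfolding P_def by blast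
      then have "(\<lambda>x. cnj (ci d (\<gamma> x))) \<in> borel_measurable M" by (rule meas_cnj)
      then show ?thesis by (simp add: ci_cnj[of _ d])
    qed
    show c2 unfolding c2_def
    proof (rule pettis[OF D(1)])
      show "\<gamma> x \<in> closure D" if "x \<in> space M" for x using \<gamma>K[OF that] D(3) by blast
      fix d assume d: "d \<in> D"
      have "(\<lambda>x. norm (\<gamma> x - d)) \<in> borel_measurable M"
      proof (rule norm_meas[OF D(1)])
        show "\<gamma> x - d \<in> closure D" if "x \<in> space M" for x
          using clos_diff[of "\<gamma> x" S d] \<gamma>K[OF that] DK d D(3) unfolding K_def by blast
        fix d' assume d': "d' \<in> D"
        have "(\<lambda>x. ci (\<gamma> x) d' - ci d d') \<in> borel_measurable M"
        proof -
          have m1[measurable]: "(\<lambda>x. ci (\<gamma> x) d') \<in> borel_measurable M" using mg d' D(2) by blast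
          show ?thesis by measurable
        qed
        then show "(\<lambda>x. ci (\<gamma> x - d) d') \<in> borel_measurable M" by (simp add: ci_diff1)
      qed
      then show "(\<lambda>x. dist (\<gamma> x) d) \<in> borel_measurable M" by (simp add: dist_norm)
    qed
  qed

  have c2c1: "c2 \<Longrightarrow> c1"
    unfolding c1_def c2_def analysis_op_def
    by (auto intro: borel_measurable_continuous_on[OF cont_ci2])

  have c2mg: "(\<lambda>x. ci (\<gamma> x) d) \<in> borel_measurable M" if c2 for d
  proof -
    have "(\<lambda>x. ci d (\<gamma> x)) \<in> borel_measurable M" using c2c1[OF that] unfolding c1_def analysis_op_def by blast
    then have "(\<lambda>x. cnj (ci d (\<gamma> x))) \<in> borel_measurable M" by (rule meas_cnj)
    then show ?thesis by (simp add: ci_cnj[of d])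
  qed

  have c2c3: "c2 \<Longrightarrow> c3"
  proof -
    assume c2: c2
    note mg[measurable] = c2mg[OF c2]
    note g[measurable] = c2[unfolded c2_def]
    have nF: "(\<lambda>\<omega>. norm (\<gamma> (snd \<omega>) + sc \<alpha> (\<gamma> (fst \<omega>)))) \<in> borel_measurable (M \<Otimes>\<^sub>M M)" for \<alpha>
    proof (rule norm_meas[OF D(1)])
      show "\<gamma> (snd \<omega>) + sc \<alpha> (\<gamma> (fst \<omega>)) \<in> closure D" if "\<omega> \<in> space (M \<Otimes>\<^sub>M M)" for \<omega>
      proof -
        have "fst \<omega> \<in> space M" "snd \<omega> \<in> space M" using that by (auto simp: space_pair_measure)
        then have "\<gamma> (snd \<omega>) + sc \<alpha> (\<gamma> (fst \<omega>)) \<in> K"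
          unfolding K_def using clos_add clos_sc \<gamma>K unfolding K_def by blast
        then show ?thesis using D(3) by blast
      qed
      fix d
      have "(\<lambda>\<omega>. ci (\<gamma> (snd \<omega>)) d + \<alpha> * ci (\<gamma> (fst \<omega>)) d) \<in> borel_measurable (M \<Otimes>\<^sub>M M)"
        by measurable
      then show "(\<lambda>\<omega>. ci (\<gamma> (snd \<omega>) + sc \<alpha> (\<gamma> (fst \<omega>))) d) \<in> borel_measurable (M \<Otimes>\<^sub>M M)"
        by (simp add: ci_add1 ci_sc1)
    qed
    note nF1[measurable] = nF[of 1] and nFi[measurable] = nF[of \<i>]
    have eq: "(\<lambda>(x, t). ci (\<gamma> t) (\<gamma> x)) = (\<lambda>\<omega>. ci (\<gamma> (snd \<omega>)) (\<gamma> (fst \<omega>)))" by auto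
    have re: "(\<lambda>\<omega>. Re (ci (\<gamma> (snd \<omega>)) (\<gamma> (fst \<omega>)))) =
       (\<lambda>\<omega>. ((norm (\<gamma> (snd \<omega>) + sc 1 (\<gamma> (fst \<omega>))))^2 - (norm (\<gamma> (snd \<omega>)))^2 - (norm (\<gamma> (fst \<omega>)))^2) / 2)"
      by (rule ext) (simp add: norm_add_sc)
    have im: "(\<lambda>\<omega>. Im (ci (\<gamma> (snd \<omega>)) (\<gamma> (fst \<omega>)))) =
       (\<lambda>\<omega>. ((norm (\<gamma> (snd \<omega>) + sc \<i> (\<gamma> (fst \<omega>))))^2 - (norm (\<gamma> (snd \<omega>)))^2 - (norm (\<gamma> (fst \<omega>)))^2) / 2)"
      by (rule ext) (simp add: norm_add_sc)
    show c3 unfolding c3_def eq borel_measurable_complex_iff re im by measurable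
  qed

  have c3c4: "c3 \<Longrightarrow> c4"
    unfolding c3_def c4_def using measurable_Pair2 by fastforce

  have c4P: "c4 \<Longrightarrow> P"
  proof -
    assume c4: c4
    show P unfolding P_def
    proof
      fix d assume "d \<in> cspan sc S"
      then obtain F c where F: "finite F" "F \<subseteq> S" "d = (\<Sum>v\<in>F. sc (c v) v)" unfolding cspan_def by auto
      have "(\<lambda>x. \<Sum>v\<in>F. c v * ci v (\<gamma> x)) \<in> borel_measurable M"
      proof (rule borel_measurable_sum)
        fix v assume "v \<in> F"
        then obtain y where y: "y \<in> space M" "v = \<gamma> y" using F(2) unfolding S_def by auto
        have "(\<lambda>x. ci (\<gamma> x) (\<gamma> y)) \<in> borel_measurable M" using c4 y(1) unfolding c4_def by blast
        then have "(\<lambda>x. c v * cnj (ci (\<gamma> x) (\<gamma> y))) \<in> borel_measurable M" by measurable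
        then show "(\<lambda>x. c v * ci v (\<gamma> x)) \<in> borel_measurable M" unfolding y(2) by (simp add: ci_cnj[of "\<gamma> y"])
      qed
      then show "(\<lambda>x. ci d (\<gamma> x)) \<in> borel_measurable M" unfolding F(3) by (simp add: ci_sum1 ci_sc1)
    qed
  qed

  have eqs: "(c1 \<longleftrightarrow> c2) \<and> (c2 \<longleftrightarrow> c3) \<and> (c3 \<longleftrightarrow> c4)"
    using c1P Pc2 c2c1 c2c3 c3c4 c4P by blast

  have second: "(\<forall>v. analysis_op ci \<gamma> v \<in> borel_measurable M) \<and>
      continuous_into_meas M (analysis_op ci \<gamma>) \<and>
      ker_meas M (analysis_op ci \<gamma>) = orth_compl ci (closed_cspan sc (ess_range M \<gamma>))"
    if c2: c2
  proof -
    note g[measurable] = c2[unfolded c2_def]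
    have part1: "\<forall>v. analysis_op ci \<gamma> v \<in> borel_measurable M" using c2c1[OF c2] unfolding c1_def .
    have part2: "continuous_into_meas M (analysis_op ci \<gamma>)"
      unfolding continuous_into_meas_def
    proof (intro allI ballI impI)
      fix v E and \<epsilon> \<delta> :: real
      assume E: "E \<in> sets M" and Efin: "emeasure M E < \<infinity>" and e: "\<epsilon> > 0" and d: "\<delta> > 0"
      define A where "A n = {x \<in> E. real n < norm (\<gamma> x)}" for n :: nat
      have Asets: "A n \<in> sets M" for n
      proof -
        have "A n = E \<inter> {x \<in> space M. real n < norm (\<gamma> x)}"
          unfolding A_def using sets.sets_into_space[OF E] by auto
        also have "\<dots> \<in> sets M" using E by measurable
        finally show ?thesis .
      qed
      have Adec: "decseq A" unfolding A_def decseq_def by auto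
      have Afin: "emeasure M (A n) \<noteq> \<infinity>" for n
      proof -
        have "emeasure M (A n) \<le> emeasure M E" using E unfolding A_def by (intro emeasure_mono) auto
        then show ?thesis using Efin by (auto simp: top_unique)
      qed
      have Aint: "(\<Inter>n. A n) = {}"
      proof (rule ccontr)
        assume "(\<Inter>n. A n) \<noteq> {}"
        then obtain x where xA: "\<And>n. x \<in> A n" by blast
        obtain n :: nat where n: "norm (\<gamma> x) < real n" using reals_Archimedean2 by blast
        have "real n < norm (\<gamma> x)" using xA[of n] unfolding A_def by blast
        then show False using n by simp
      qed
      have lim: "(\<lambda>n. emeasure M (A n)) \<longlonglongrightarrow> 0"
        using Lim_emeasure_decseq[of A M] Asets Adec Afin Aint by auto
      have "ennreal \<delta> > 0" using d by simp
      from order_tendstoD(2)[OF lim this] obtain N where N: "emeasure M (A N) < ennreal \<delta>"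
        by (auto simp: eventually_sequentially)
      define \<eta> where "\<eta> = \<epsilon> / (real N + 1)"
      have eta: "\<eta> > 0" using e by (simp add: \<eta>_def)
      show "\<exists>\<eta>>0. \<forall>w. norm (w - v) < \<eta> \<longrightarrow>
           emeasure M {x \<in> E. \<epsilon> < cmod (analysis_op ci \<gamma> w x - analysis_op ci \<gamma> v x)} < ennreal \<delta>"
      proof (intro exI[of _ \<eta>] conjI allI impI eta)
        fix w assume w: "norm (w - v) < \<eta>"
        have sub: "{x \<in> E. \<epsilon> < cmod (analysis_op ci \<gamma> w x - analysis_op ci \<gamma> v x)} \<subseteq> A N"
        proof
          fix x assume x: "x \<in> {x \<in> E. \<epsilon> < cmod (analysis_op ci \<gamma> w x - analysis_op ci \<gamma> v x)}"
          then have x1: "x \<in> E" and x2: "\<epsilon> < cmod (ci (w - v) (\<gamma> x))"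
            unfolding analysis_op_def by (auto simp: ci_diff1)
          show "x \<in> A N"
          proof (rule ccontr)
            assume "x \<notin> A N"
            then have nx: "norm (\<gamma> x) \<le> real N" using x1 unfolding A_def by auto
            have "cmod (ci (w - v) (\<gamma> x)) \<le> norm (w - v) * norm (\<gamma> x)" by (rule CS)
            also have "\<dots> \<le> \<eta> * real N" using w nx eta by (intro mult_mono) auto
            also have "\<dots> < \<epsilon>" using e unfolding \<eta>_def by (simp add: field_simps)
            finally show False using x2 by simp
          qed
        qed
        have "emeasure M {x \<in> E. \<epsilon> < cmod (analysis_op ci \<gamma> w x - analysis_op ci \<gamma> v x)} \<le> emeasure M (A N)"
          using sub Asets by (rule emeasure_mono)
        then show "emeasure M {x \<in> E. \<epsilon> < cmod (analysis_op ci \<gamma> w x - analysis_op ci \<gamma> v x)} < ennreal \<delta>"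
          using N by (rule le_less_trans)
      qed
    qed
    have pre_sets: "\<gamma> -` ball y r \<inter> space M \<in> sets M" for y r
      using g by (rule measurable_sets) simp
    have part3: "ker_meas M (analysis_op ci \<gamma>) = orth_compl ci (ess_range M \<gamma>)"
    proof
      show "ker_meas M (analysis_op ci \<gamma>) \<subseteq> orth_compl ci (ess_range M \<gamma>)"
      proof
        fix v assume "v \<in> ker_meas M (analysis_op ci \<gamma>)"
        then have ae: "AE x in M. ci v (\<gamma> x) = 0" unfolding ker_meas_def analysis_op_def by simp
        show "v \<in> orth_compl ci (ess_range M \<gamma>)" unfolding orth_compl_def
        proof (intro CollectI ballI)
          fix s assume s: "s \<in> ess_range M \<gamma>"
          show "ci v s = 0"
          proof (rule ccontr)
            assume ne: "ci v s \<noteq> 0"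
            define c where "c = cmod (ci v s)"
            have c: "c > 0" using ne by (simp add: c_def)
            define \<epsilon> where "\<epsilon> = c / (norm v + 1)"
            have nv: "norm v + 1 > 0" using norm_ge_zero[of v] by linarith
            have eps: "\<epsilon> > 0" using c nv unfolding \<epsilon>_def by (rule divide_pos_pos)
            have pos: "emeasure M (\<gamma> -` ball s \<epsilon> \<inter> space M) > 0"
              using s eps unfolding ess_range_def by blast
            have subB: "\<gamma> -` ball s \<epsilon> \<inter> space M \<subseteq> {x \<in> space M. \<not> ci v (\<gamma> x) = 0}"
            proof
              fix x assume x: "x \<in> \<gamma> -` ball s \<epsilon> \<inter> space M"
              then have dx: "norm (s - \<gamma> x) < \<epsilon>" by (simp add: dist_norm)
              have "cmod (ci v (s - \<gamma> x)) \<le> norm v * norm (s - \<gamma> x)" by (rule CS)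
              also have "\<dots> \<le> norm v * \<epsilon>" using dx by (intro mult_left_mono) auto
              also have "\<dots> < c"
              proof -
                have "norm v * \<epsilon> < (norm v + 1) * \<epsilon>" using eps by simp
                also have "\<dots> = c" unfolding \<epsilon>_def using nv by simp
                finally show ?thesis .
              qed
              finally have "cmod (ci v s - ci v (\<gamma> x)) < cmod (ci v s)" by (simp add: ci_diff2 c_def)
              then have "ci v (\<gamma> x) \<noteq> 0" by auto
              then show "x \<in> {x \<in> space M. \<not> ci v (\<gamma> x) = 0}" using x by auto
            qed
            from ae obtain N where N: "{x \<in> space M. \<not> ci v (\<gamma> x) = 0} \<subseteq> N" "emeasure M N = 0" "N \<in> sets M"
              by (rule AE_E)
            have "emeasure M (\<gamma> -` ball s \<epsilon> \<inter> space M) \<le> emeasure M N"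
              using subB N(1) N(3) by (intro emeasure_mono) auto
            then show False using pos N(2) by simp
          qed
        qed
      qed
    next
      show "orth_compl ci (ess_range M \<gamma>) \<subseteq> ker_meas M (analysis_op ci \<gamma>)"
      proof
        fix v assume v: "v \<in> orth_compl ci (ess_range M \<gamma>)"
        define B where "B p = (if emeasure M (\<gamma> -` ball (fst p) (1 / real (Suc (snd p))) \<inter> space M) = 0
            then \<gamma> -` ball (fst p) (1 / real (Suc (snd p))) \<inter> space M else {})" for p :: "'h \<times> nat"
        have Bnull: "(\<Union>p\<in>D \<times> UNIV. B p) \<in> null_sets M"
          by (rule null_sets_UN') (use D(1) pre_sets in \<open>auto simp: B_def\<close>)
        have "{x \<in> space M. \<not> ci v (\<gamma> x) = 0} \<subseteq> (\<Union>p\<in>D \<times> UNIV. B p)"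
        proof
          fix x assume x: "x \<in> {x \<in> space M. \<not> ci v (\<gamma> x) = 0}"
          then have "\<gamma> x \<notin> ess_range M \<gamma>" using v unfolding orth_compl_def by auto
          then obtain e where e: "e > 0" "\<not> emeasure M (\<gamma> -` ball (\<gamma> x) e \<inter> space M) > 0"
            unfolding ess_range_def by auto
          then have e0: "emeasure M (\<gamma> -` ball (\<gamma> x) e \<inter> space M) = 0" by (simp add: zero_less_iff_neq_zero)
          obtain n::nat where n: "1 / real (Suc n) < e/2" using e by (metis half_gt_zero nat_approx_posE)
          have "1 / real (Suc n) > 0" by simp
          moreover have "\<gamma> x \<in> closure D" using \<gamma>K x D(3) by blast
          ultimately obtain d where d: "d \<in> D" "dist d (\<gamma> x) < 1 / real (Suc n)"
            using closure_approachable by blast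
          have bsub: "ball d (1 / real (Suc n)) \<subseteq> ball (\<gamma> x) e"
          proof
            fix y assume "y \<in> ball d (1 / real (Suc n))"
            then have "dist d y < 1 / real (Suc n)" by simp
            then have "dist (\<gamma> x) y < e" using d(2) n dist_triangle[of "\<gamma> x" y d] by (simp add: dist_commute)
            then show "y \<in> ball (\<gamma> x) e" by simp
          qed
          have "emeasure M (\<gamma> -` ball d (1 / real (Suc n)) \<inter> space M) \<le> emeasure M (\<gamma> -` ball (\<gamma> x) e \<inter> space M)"
            using bsub pre_sets by (intro emeasure_mono) auto
          then have "emeasure M (\<gamma> -` ball d (1 / real (Suc n)) \<inter> space M) = 0" using e0 by simp
          then have "B (d, n) = \<gamma> -` ball d (1 / real (Suc n)) \<inter> space M" unfolding B_def by simp
          moreover have "x \<in> \<gamma> -` ball d (1 / real (Suc n)) \<inter> space M" using x d(2) by simp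
          ultimately show "x \<in> (\<Union>p\<in>D \<times> UNIV. B p)" using d(1) by blast
        qed
        then have "AE x in M. ci v (\<gamma> x) = 0" by (rule AE_I'[OF Bnull])
        then show "v \<in> ker_meas M (analysis_op ci \<gamma>)" unfolding ker_meas_def analysis_op_def by simp
      qed
    qed
    show ?thesis using part1 part2 part3 orth_clos by simp
  qed

  show ?thesis using eqs second by blast
qed

end
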